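(* Assume $f$ has a unique global maximizer, contains no weak epistasis, and every order-1 epistasis of $f$ is strict. Then any two distinct maximal cliques of the epistatic graph are vertex-disjoint.
   Context: Fix $\ell\ge1$, loci $V=\{0,\dots,\ell-1\}$, chromosomes $\vec y\in\{0,1\}^V$, fitness $f:\{0,1\}^V\to\mathbb R$ (maximized) with unique global maximizer $g$. An assignment $A$ is a set of pairs $(v,a)$ with at most one pair per locus; coverage $\mathcal C(A)$; $A[v]$ its allele at $v$. $\Psi_A$ is the set of chromosomes agreeing with $A$ on $\mathcal C(A)$ with maximum fitness among such chromosomes; $\Psi_A[v]=\{\psi_v:\psi\in\Psi_A\}$. Epistasis: for $v\in V$ and nonempty $S\subseteq V\setminus\{v\}$, $S\Rightarrow v$ iff for every $s\in S$ there exists an assignment $A$ with $\mathcal C(A)=S$ and $\Psi_A[v]\neq\Psi_{A\setminus\{(s,A[s])\}}[v]$. An epistasis $S\Rightarrow v$ with $|S|\ge2$ is weak if no nonempty proper subset $T\subsetneq S$ has $T\Rightarrow v$. An order-1 epistasis $\{u\}\Rightarrow v$ is strict, written $u\rightarrow v$, if $\Psi_{\{(u,1-g[u])\}}[v]=\{1-g[v]\}$. The epistatic graph is the directed graph on $V$ with edge $u\to v$ iff $\{u\}\Rightarrow v$. A clique is a set of vertices $C$ with $a\rightarrow b$ for all distinct $a,b\in C$; it is maximal if it is not properly contained in another clique. *)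

theory Defs
  imports Complex_Main
begin

text \<open>Loci are 0..<l. Alleles {0,1} are encoded as bool (False = 0, True = 1),
so 1 - a is \<not> a. An assignment is a partial map nat => bool option whose
domain (the coverage) is contained in the loci; being a map enforces at most
one pair per locus.\<close>

definition chroms :: "nat \<Rightarrow> (nat \<Rightarrow> bool) set" where
  "chroms l = {y. \<forall>i. l \<le> i \<longrightarrow> \<not> y i}"

definition is_assignment :: "nat \<Rightarrow> (nat \<rightharpoonup> bool) \<Rightarrow> bool" where
  "is_assignment l A \<longleftrightarrow> dom A \<subseteq> {..<l}"

definition agree :: "nat \<Rightarrow> (nat \<rightharpoonup> bool) \<Rightarrow> (nat \<Rightarrow> bool) set" where
  "agree l A = {y \<in> chroms l. \<forall>v \<in> dom A. A v = Some (y v)}"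

definition Psi :: "nat \<Rightarrow> ((nat \<Rightarrow> bool) \<Rightarrow> real) \<Rightarrow> (nat \<rightharpoonup> bool) \<Rightarrow> (nat \<Rightarrow> bool) set" where
  "Psi l f A = {y \<in> agree l A. \<forall>z \<in> agree l A. f z \<le> f y}"

definition PsiAt :: "nat \<Rightarrow> ((nat \<Rightarrow> bool) \<Rightarrow> real) \<Rightarrow> (nat \<rightharpoonup> bool) \<Rightarrow> nat \<Rightarrow> bool set" where
  "PsiAt l f A v = (\<lambda>y. y v) ` Psi l f A"

definition unique_maximizer :: "nat \<Rightarrow> ((nat \<Rightarrow> bool) \<Rightarrow> real) \<Rightarrow> (nat \<Rightarrow> bool) \<Rightarrow> bool" where
  "unique_maximizer l f g \<longleftrightarrow> g \<in> chroms l \<and> (\<forall>y \<in> chroms l. y \<noteq> g \<longrightarrow> f y < f g)"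

definition epistasis :: "nat \<Rightarrow> ((nat \<Rightarrow> bool) \<Rightarrow> real) \<Rightarrow> nat set \<Rightarrow> nat \<Rightarrow> bool" where
  "epistasis l f S v \<longleftrightarrow> v < l \<and> S \<noteq> {} \<and> S \<subseteq> {..<l} - {v} \<and>
     (\<forall>s \<in> S. \<exists>A. is_assignment l A \<and> dom A = S \<and>
        PsiAt l f A v \<noteq> PsiAt l f (A(s := None)) v)"

definition weak_epistasis :: "nat \<Rightarrow> ((nat \<Rightarrow> bool) \<Rightarrow> real) \<Rightarrow> nat set \<Rightarrow> nat \<Rightarrow> bool" where
  "weak_epistasis l f S v \<longleftrightarrow> epistasis l f S v \<and> 2 \<le> card S \<and>
     \<not> (\<exists>T. T \<noteq> {} \<and> T \<subset> S \<and> epistasis l f T v)"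

definition strict_epi :: "nat \<Rightarrow> ((nat \<Rightarrow> bool) \<Rightarrow> real) \<Rightarrow> (nat \<Rightarrow> bool) \<Rightarrow> nat \<Rightarrow> nat \<Rightarrow> bool" where
  "strict_epi l f g u v \<longleftrightarrow> epistasis l f {u} v \<and>
     PsiAt l f [u \<mapsto> \<not> g u] v = {\<not> g v}"

definition epi_edge :: "nat \<Rightarrow> ((nat \<Rightarrow> bool) \<Rightarrow> real) \<Rightarrow> nat \<Rightarrow> nat \<Rightarrow> bool" where
  "epi_edge l f u v \<longleftrightarrow> epistasis l f {u} v"

definition clique :: "nat \<Rightarrow> ((nat \<Rightarrow> bool) \<Rightarrow> real) \<Rightarrow> (nat \<Rightarrow> bool) \<Rightarrow> nat set \<Rightarrow> bool" where
  "clique l f g C \<longleftrightarrow> C \<subseteq> {..<l} \<and>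
     (\<forall>a \<in> C. \<forall>b \<in> C. a \<noteq> b \<longrightarrow> strict_epi l f g a b)"

definition maximal_clique :: "nat \<Rightarrow> ((nat \<Rightarrow> bool) \<Rightarrow> real) \<Rightarrow> (nat \<Rightarrow> bool) \<Rightarrow> nat set \<Rightarrow> bool" where
  "maximal_clique l f g C \<longleftrightarrow> clique l f g C \<and> \<not> (\<exists>D. clique l f g D \<and> C \<subset> D)"

end

theory Submission
  imports Defs
begin

lemma psi_empty:
  assumes "unique_maximizer l f g"
  shows "Psi l f Map.empty = {g}"
  using assms unfolding unique_maximizer_def Psi_def agree_def
  by (auto, meson less_eq_real_def not_le)

lemma psiat_empty:
  assumes "unique_maximizer l f g"
  shows "PsiAt l f Map.empty v = {g v}"
  using psi_empty[OF assms] unfolding PsiAt_def by simp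

lemma strict_facts:
  assumes "strict_epi l f g a c"
  shows "Psi l f [a\<mapsto>\<not> g a] \<noteq> {}" "\<forall>y\<in>Psi l f [a\<mapsto>\<not> g a]. y c = (\<not> g c)"
  using assms unfolding strict_epi_def PsiAt_def by (fastforce, blast)

lemma agree1: "y \<in> agree l [a\<mapsto>x] \<longleftrightarrow> y \<in> chroms l \<and> y a = x"
  unfolding agree_def by auto

lemma psi_eq:
  assumes "strict_epi l f g a c" "strict_epi l f g c a"
  shows "Psi l f [a\<mapsto>\<not> g a] = Psi l f [c\<mapsto>\<not> g c]"
proof -
  let ?P = "Psi l f [a\<mapsto>\<not> g a]" and ?Q = "Psi l f [c\<mapsto>\<not> g c]"
  note P = strict_facts[OF assms(1)] and Q = strict_facts[OF assms(2)]
  have PA: "y \<in> agree l [c\<mapsto>\<not> g c]" if "y \<in> ?P" for y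
    using that P(2) unfolding Psi_def agree1 by auto
  have QA: "y \<in> agree l [a\<mapsto>\<not> g a]" if "y \<in> ?Q" for y
    using that Q(2) unfolding Psi_def agree1 by auto
  have feq: "f y = f z" if "y \<in> ?P" "z \<in> ?Q" for y z
    using that PA QA unfolding Psi_def
    by (metis (no_types, lifting) PA QA mem_Collect_eq order_antisym)
  show ?thesis
  proof
    show "?P \<subseteq> ?Q"
    proof
      fix y assume y: "y \<in> ?P"
      obtain z where z: "z \<in> ?Q" using Q(1) by auto
      show "y \<in> ?Q" using PA[OF y] z feq[OF y z] unfolding Psi_def by auto
    qed
    show "?Q \<subseteq> ?P"
    proof
      fix z assume z: "z \<in> ?Q"
      obtain y where y: "y \<in> ?P" using P(1) by auto
      show "z \<in> ?P" using QA[OF z] y feq[OF y z] unfolding Psi_def by auto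
    qed
  qed
qed

lemma strict_from:
  assumes um: "unique_maximizer l f g" and xl: "x < l" and xy: "x \<noteq> y"
    and ps: "Psi l f [x\<mapsto>\<not> g x] = Psi l f [c\<mapsto>\<not> g c]"
    and cy: "strict_epi l f g c y"
  shows "strict_epi l f g x y"
proof -
  have at: "PsiAt l f [x\<mapsto>\<not> g x] y = {\<not> g y}"
    using cy ps unfolding strict_epi_def PsiAt_def by simp
  have yl: "y < l" using cy unfolding strict_epi_def epistasis_def by simp
  have "epistasis l f {x} y"
    unfolding epistasis_def
  proof (intro conjI ballI)
    fix s assume s: "s \<in> {x}"
    show "\<exists>A. is_assignment l A \<and> dom A = {x} \<and> PsiAt l f A y \<noteq> PsiAt l f (A(s := None)) y"
      apply (rule exI[of _ "[x\<mapsto>\<not> g x]"])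
      using s at psiat_empty[OF um] xl unfolding is_assignment_def by auto
  qed (use yl xl xy in auto)
  then show ?thesis using at unfolding strict_epi_def by simp
qed

lemma union_clique:
  assumes um: "unique_maximizer l f g"
    and c1: "clique l f g C1" and c2: "clique l f g C2" and c: "c \<in> C1" "c \<in> C2"
  shows "clique l f g (C1 \<union> C2)"
proof -
  have gen: "strict_epi l f g x y" if A: "clique l f g A" and B: "clique l f g B"
    and cA: "c \<in> A" and cB: "c \<in> B" and x: "x \<in> A" and y: "y \<in> B" and xy: "x \<noteq> y" for A B x y
  proof (cases "x = c")
    case True then show ?thesis using B cB y xy unfolding clique_def by auto
  next
    case False
    have xl: "x < l" using A x unfolding clique_def by auto
    have ps: "Psi l f [x\<mapsto>\<not> g x] = Psi l f [c\<mapsto>\<not> g c]"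
      using psi_eq A x cA False unfolding clique_def by metis
    show ?thesis
    proof (cases "y = c")
      case True then show ?thesis using A cA x xy unfolding clique_def by auto
    next
      case False
      have "strict_epi l f g c y" using B cB y False unfolding clique_def by auto
      then show ?thesis using strict_from[OF um xl xy ps] by simp
    qed
  qed
  show ?thesis unfolding clique_def
  proof (intro conjI ballI impI)
    show "C1 \<union> C2 \<subseteq> {..<l}" using c1 c2 unfolding clique_def by auto
    fix a b assume a: "a \<in> C1 \<union> C2" and b: "b \<in> C1 \<union> C2" and ab: "a \<noteq> b"
    show "strict_epi l f g a b"
      using a b gen[OF c1 c2 c(1) c(2) _ _ ab] gen[OF c2 c1 c(2) c(1) _ _ ab]
        gen[OF c1 c1 c(1) c(1) _ _ ab] gen[OF c2 c2 c(2) c(2) _ _ ab] by blast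
  qed
qed

theorem corollary6:
  fixes l :: nat and f :: "(nat \<Rightarrow> bool) \<Rightarrow> real" and g :: "nat \<Rightarrow> bool"
    and C1 C2 :: "nat set"
  assumes "1 \<le> l"
    and "unique_maximizer l f g"
    and "\<forall>S v. \<not> weak_epistasis l f S v"
    and "\<forall>u v. epi_edge l f u v \<longrightarrow> strict_epi l f g u v"
    and "maximal_clique l f g C1" and "maximal_clique l f g C2"
    and "C1 \<noteq> C2"
  shows "C1 \<inter> C2 = {}"
proof (rule ccontr)
  assume "C1 \<inter> C2 \<noteq> {}"
  then obtain c where c: "c \<in> C1" "c \<in> C2" by auto
  have m1: "clique l f g C1" "\<not> (\<exists>D. clique l f g D \<and> C1 \<subset> D)"
    and m2: "clique l f g C2" "\<not> (\<exists>D. clique l f g D \<and> C2 \<subset> D)"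
    using assms(5,6) unfolding maximal_clique_def by auto
  have u: "clique l f g (C1 \<union> C2)" using union_clique[OF assms(2) m1(1) m2(1) c] .
  have "C2 \<subseteq> C1" using m1(2) u by blast
  moreover have "C1 \<subseteq> C2" using m2(2) u by blast
  ultimately show False using assms(7) by blast
qed

end
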